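(* Let $X\in\mathbb{R}^g$ be a random block, let $\{L_B\}_{B\in\overline{\mathcal C}}$ be nonnegative block losses, and let $S,F$ be a measurable partition of the block space with $p=\mathbb{P}(X\in S)$. Let $R_S^\star=\inf_{B}R_S(B)$ and $R_F^\star=\inf_B R_F(B)$. If grids $B_S,B_F\in\overline{\mathcal C}$ and constants $\alpha_S,\alpha_F$ satisfy $R_S(B_S)\le\alpha_S R_S^\star$ and $R_F(B_F)\le\alpha_F R_F^\star$, then $$R_{\mathrm{PO2}}(B_S,B_F)\le\max\{\alpha_S,\alpha_F\}\,R^\star.$$
   Context: Grid space: $\overline{\mathcal C}:=\{B=(b_0,\dots,b_7):0=b_0\le\cdots\le b_7=1\}$. For a block $X=(X_1,\dots,X_g)$ with $M=\max_i|X_i|$, the absmax block loss is $L_B(X)=M^2\frac1g\sum_i\min_j(|X_i|/M-b_j)^2$ (zero if $M=0$). Conditional risks: $R_S(B):=\mathbb{E}[L_B(X)\mid X\in S]$, $R_F(B):=\mathbb{E}[L_B(X)\mid X\in F]$. Two-grid risk: $R_{\mathrm{PO2}}(B_1,B_2):=\mathbb{E}[\min\{L_{B_1}(X),L_{B_2}(X)\}]$. Best single-grid risk: $R^\star:=\inf_{B\in\overline{\mathcal C}}\mathbb{E}L_B(X)=\inf_B\bigl(pR_S(B)+(1-p)R_F(B)\bigr)$. *)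

theory Defs
  imports "HOL-Probability.Probability"
begin

text \<open>Grid space: grids B = (b_0,...,b_7) with 0 = b_0 <= ... <= b_7 = 1,
  represented as functions nat => real (only the values at 0..7 matter).\<close>
definition Cbar :: "(nat \<Rightarrow> real) set" where
  "Cbar = {b. b 0 = 0 \<and> b 7 = 1 \<and> (\<forall>i<7. b i \<le> b (Suc i))}"

definition cond_risk ::
  "'a measure \<Rightarrow> ('a \<Rightarrow> 'b) \<Rightarrow> ('c \<Rightarrow> 'b \<Rightarrow> real) \<Rightarrow> 'b set \<Rightarrow> 'c \<Rightarrow> real" where
  "cond_risk M X L A B =
     (\<integral>\<omega>. indicator A (X \<omega>) * L B (X \<omega>) \<partial>M) / measure M {\<omega>\<in>space M. X \<omega> \<in> A}"

definition risk_PO2 ::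
  "'a measure \<Rightarrow> ('a \<Rightarrow> 'b) \<Rightarrow> ('c \<Rightarrow> 'b \<Rightarrow> real) \<Rightarrow> 'c \<Rightarrow> 'c \<Rightarrow> real" where
  "risk_PO2 M X L B1 B2 = (\<integral>\<omega>. min (L B1 (X \<omega>)) (L B2 (X \<omega>)) \<partial>M)"

definition best_risk ::
  "'a measure \<Rightarrow> ('a \<Rightarrow> 'b) \<Rightarrow> ('c \<Rightarrow> 'b \<Rightarrow> real) \<Rightarrow> 'c set \<Rightarrow> real" where
  "best_risk M X L G = (INF B\<in>G. \<integral>\<omega>. L B (X \<omega>) \<partial>M)"

end

theory Submission
  imports Defs
begin

lemma cond_risk_mult:
  fixes M :: "'a measure" and X :: "'a \<Rightarrow> 'b::topological_space" and f :: "'b \<Rightarrow> real"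
  assumes P: "prob_space M" and Xm: "X \<in> borel_measurable M" and A: "A \<in> sets borel"
  shows "(\<integral>\<omega>. indicator A (X \<omega>) * f (X \<omega>) \<partial>M)
       = measure M {\<omega>\<in>space M. X \<omega> \<in> A} * ((\<integral>\<omega>. indicator A (X \<omega>) * f (X \<omega>) \<partial>M) / measure M {\<omega>\<in>space M. X \<omega> \<in> A})"
proof (cases "measure M {\<omega>\<in>space M. X \<omega> \<in> A} = 0")
  case True
  interpret prob_space M by (rule P)
  have sA: "{\<omega>\<in>space M. X \<omega> \<in> A} \<in> sets M"
    using measurable_sets[OF Xm A] by (simp add: vimage_def Int_def conj_commute)
  have "{\<omega>\<in>space M. X \<omega> \<in> A} \<in> null_sets M"
    using True sA by (auto simp: emeasure_eq_measure)
  then have "AE \<omega> in M. \<omega> \<notin> {\<omega>\<in>space M. X \<omega> \<in> A}" by (rule AE_not_in)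
  then have "AE \<omega> in M. indicator A (X \<omega>) * f (X \<omega>) = 0"
    using AE_space by eventually_elim (auto simp: indicator_def)
  then have "(\<integral>\<omega>. indicator A (X \<omega>) * f (X \<omega>) \<partial>M) = 0" by (rule integral_eq_zero_AE)
  then show ?thesis by simp
qed simp

theorem corollary1:
  fixes M :: "'a measure"
    and X :: "'a \<Rightarrow> real ^ 'g"
    and L :: "(nat \<Rightarrow> real) \<Rightarrow> real ^ 'g \<Rightarrow> real"
    and S F :: "(real ^ 'g) set"
    and B_S B_F :: "nat \<Rightarrow> real"
    and \<alpha>_S \<alpha>_F :: real
  assumes "prob_space M"
    and "X \<in> borel_measurable M"
    and "\<And>B. B \<in> Cbar \<Longrightarrow> L B \<in> borel_measurable borel"
    and "\<And>B x. B \<in> Cbar \<Longrightarrow> 0 \<le> L B x"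
    and "\<And>B. B \<in> Cbar \<Longrightarrow> integrable M (\<lambda>\<omega>. L B (X \<omega>))"
    and "S \<in> sets borel" and "F \<in> sets borel"
    and "S \<inter> F = {}" and "S \<union> F = UNIV"
    and "B_S \<in> Cbar" and "B_F \<in> Cbar"
    and "0 \<le> max \<alpha>_S \<alpha>_F"
    and "cond_risk M X L S B_S \<le> \<alpha>_S * (INF B\<in>Cbar. cond_risk M X L S B)"
    and "cond_risk M X L F B_F \<le> \<alpha>_F * (INF B\<in>Cbar. cond_risk M X L F B)"
  shows "risk_PO2 M X L B_S B_F \<le> max \<alpha>_S \<alpha>_F * best_risk M X L Cbar"
proof -
  note a = assms
  interpret prob_space M by (rule a(1))
  define m where "m = max \<alpha>_S \<alpha>_F"
  define I where "I A B = (\<integral>\<omega>. indicator A (X \<omega>) * L B (X \<omega>) \<partial>M)" for A B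
  define p where "p A = measure M {\<omega>\<in>space M. X \<omega> \<in> A}" for A
  have Ieq: "I A B = p A * cond_risk M X L A B" if "A \<in> sets borel" for A B
    unfolding I_def p_def cond_risk_def using cond_risk_mult[OF a(1) a(2) that] by simp
  have p0: "0 \<le> p A" for A unfolding p_def by simp
  have intI: "integrable M (\<lambda>\<omega>. indicator A (X \<omega>) * L B (X \<omega>))" if "A \<in> sets borel" "B \<in> Cbar" for A B
  proof -
    have "(\<lambda>\<omega>. indicator A (X \<omega>)::real) \<in> borel_measurable M"
      using measurable_compose[OF a(2) borel_measurable_indicator[OF that(1)]] by (simp add: o_def)
    moreover have "(\<lambda>\<omega>. L B (X \<omega>)) \<in> borel_measurable M"
      using measurable_compose[OF a(2) a(3)[OF that(2)]] by (simp add: o_def)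
    ultimately show ?thesis
      by (intro Bochner_Integration.integrable_bound[OF a(5)[OF that(2)]])
         (auto simp: indicator_def)
  qed
  have crnn: "0 \<le> cond_risk M X L A B" if "B \<in> Cbar" for A B
    unfolding cond_risk_def using a(4)[OF that]
    by (intro divide_nonneg_nonneg integral_nonneg_AE) (auto simp: indicator_def)
  have key: "I A B0 \<le> m * I A B"
    if A: "A \<in> sets borel" and B0: "B0 \<in> Cbar" and B: "B \<in> Cbar" and \<alpha>: "\<alpha> \<le> m"
      and h: "cond_risk M X L A B0 \<le> \<alpha> * (INF B\<in>Cbar. cond_risk M X L A B)" for A B0 B \<alpha>
  proof -
    have bdd: "bdd_below ((\<lambda>B. cond_risk M X L A B) ` Cbar)"
      using crnn by (auto intro!: bdd_belowI[where m=0])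
    have inf0: "0 \<le> (INF B\<in>Cbar. cond_risk M X L A B)"
      using B crnn by (auto intro!: cINF_greatest)
    have infle: "(INF B\<in>Cbar. cond_risk M X L A B) \<le> cond_risk M X L A B"
      by (rule cINF_lower[OF bdd B])
    have m0: "0 \<le> m" using a(12) m_def by simp
    have "\<alpha> * (INF B\<in>Cbar. cond_risk M X L A B) \<le> m * (INF B\<in>Cbar. cond_risk M X L A B)"
      using inf0 \<alpha> by (simp add: mult_right_mono)
    also have "\<dots> \<le> m * cond_risk M X L A B" using infle m0 by (simp add: mult_left_mono)
    finally have "cond_risk M X L A B0 \<le> m * cond_risk M X L A B" using h by simp
    then have "p A * cond_risk M X L A B0 \<le> p A * (m * cond_risk M X L A B)"
      using p0 by (simp add: mult_left_mono)
    then show ?thesis using Ieq[OF A] by (simp add: algebra_simps)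
  qed
  have main: "risk_PO2 M X L B_S B_F \<le> m * (\<integral>\<omega>. L B (X \<omega>) \<partial>M)" if B: "B \<in> Cbar" for B
  proof -
    have "risk_PO2 M X L B_S B_F \<le> (\<integral>\<omega>. indicator S (X \<omega>) * L B_S (X \<omega>) + indicator F (X \<omega>) * L B_F (X \<omega>) \<partial>M)"
      unfolding risk_PO2_def
    proof (rule integral_mono)
      show "integrable M (\<lambda>\<omega>. min (L B_S (X \<omega>)) (L B_F (X \<omega>)))"
        using a(5)[OF a(10)] a(5)[OF a(11)] by auto
      show "integrable M (\<lambda>\<omega>. indicator S (X \<omega>) * L B_S (X \<omega>) + indicator F (X \<omega>) * L B_F (X \<omega>))"
        using intI[OF a(6) a(10)] intI[OF a(7) a(11)] by auto
      fix \<omega>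
      show "min (L B_S (X \<omega>)) (L B_F (X \<omega>)) \<le> indicator S (X \<omega>) * L B_S (X \<omega>) + indicator F (X \<omega>) * L B_F (X \<omega>)"
        using a(8) a(9) by (cases "X \<omega> \<in> S") (auto simp: indicator_def)
    qed
    also have "\<dots> = I S B_S + I F B_F"
      unfolding I_def using intI[OF a(6) a(10)] intI[OF a(7) a(11)] by simp
    also have "\<dots> \<le> m * I S B + m * I F B"
      using key[OF a(6) a(10) B _ a(13)] key[OF a(7) a(11) B _ a(14)] m_def by force
    also have "I S B + I F B = (\<integral>\<omega>. L B (X \<omega>) \<partial>M)"
    proof -
      have "I S B + I F B = (\<integral>\<omega>. indicator S (X \<omega>) * L B (X \<omega>) + indicator F (X \<omega>) * L B (X \<omega>) \<partial>M)"
        unfolding I_def using intI[OF a(6) B] intI[OF a(7) B] by simp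
      also have "\<dots> = (\<integral>\<omega>. L B (X \<omega>) \<partial>M)"
        by (rule Bochner_Integration.integral_cong) (use a(8) a(9) in \<open>auto simp: indicator_def\<close>)
      finally show ?thesis .
    qed
    then have "m * I S B + m * I F B = m * (\<integral>\<omega>. L B (X \<omega>) \<partial>M)" by (metis distrib_left)
    finally show ?thesis .
  qed
  show ?thesis
  proof (cases "m = 0")
    case True
    then show ?thesis using main[OF a(10)] m_def by simp
  next
    case False
    then have mp: "0 < m" using a(12) m_def by simp
    have "risk_PO2 M X L B_S B_F / m \<le> best_risk M X L Cbar"
      unfolding best_risk_def
    proof (rule cINF_greatest)
      show "Cbar \<noteq> {}" using a(10) by auto
      fix B assume "B \<in> Cbar"
      then show "risk_PO2 M X L B_S B_F / m \<le> (\<integral>\<omega>. L B (X \<omega>) \<partial>M)"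
        using main mp by (simp add: divide_le_eq mult.commute)
    qed
    then show ?thesis using mp m_def by (simp add: divide_le_eq mult.commute)
  qed
qed

end
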